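(* For any theory $\Sigma$ and any formula $A \Rightarrow B$, the following are equivalent: (1) $\Sigma \models A \Rightarrow B$; (2) $[A]_\Sigma \models A \Rightarrow B$; (3) $B \subseteq [A]_\Sigma$.
   Context: $Y$ is a non-empty finite set of attributes and $\mathcal{T}_Y = \{y^i \mid y \in Y, i \in \mathbb{Z}\}$. For $M \subseteq \mathcal{T}_Y$ and $j \in \mathbb{Z}$, $M + j = \{y^{i+j} \mid y^i \in M\}$. A formula is $A \Rightarrow B$ with $A,B$ finite subsets of $\mathcal{T}_Y$; $M \models A \Rightarrow B$ means that for every $i \in \mathbb{Z}$, $A+i \subseteq M$ implies $B+i \subseteq M$. For a theory $\Sigma$, $\mathrm{Mod}(\Sigma)$ is the set of all $M \subseteq \mathcal{T}_Y$ in which all formulas of $\Sigma$ are true; $\Sigma \models A \Rightarrow B$ means $M \models A \Rightarrow B$ for all $M \in \mathrm{Mod}(\Sigma)$; $[M]_\Sigma = \bigcap\{N \in \mathrm{Mod}(\Sigma) \mid M \subseteq N\}$. *)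

theory Defs
  imports Main
begin

text \<open>Temporal attributes y^i are represented as pairs (y, i) :: 'y \<times> int.
  The set of all temporal attributes over the attribute set Y is T Y.\<close>

definition T :: "'y set \<Rightarrow> ('y \<times> int) set" where
  "T Y = Y \<times> (UNIV :: int set)"

definition shift :: "('y \<times> int) set \<Rightarrow> int \<Rightarrow> ('y \<times> int) set" where
  "shift M j = {(y, i + j) | y i. (y, i) \<in> M}"

text \<open>A formula A \<Rightarrow> B is a pair (A, B) of finite subsets of T Y.\<close>

definition is_formula :: "'y set \<Rightarrow> ('y \<times> int) set \<times> ('y \<times> int) set \<Rightarrow> bool" where
  "is_formula Y f \<longleftrightarrow> finite (fst f) \<and> finite (snd f) \<and> fst f \<subseteq> T Y \<and> snd f \<subseteq> T Y"

definition sat :: "('y \<times> int) set \<Rightarrow> ('y \<times> int) set \<times> ('y \<times> int) set \<Rightarrow> bool" where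
  "sat M f \<longleftrightarrow> (\<forall>i::int. shift (fst f) i \<subseteq> M \<longrightarrow> shift (snd f) i \<subseteq> M)"

definition Mod :: "'y set \<Rightarrow> (('y \<times> int) set \<times> ('y \<times> int) set) set \<Rightarrow> ('y \<times> int) set set" where
  "Mod Y \<Sigma> = {M. M \<subseteq> T Y \<and> (\<forall>f\<in>\<Sigma>. sat M f)}"

definition entails :: "'y set \<Rightarrow> (('y \<times> int) set \<times> ('y \<times> int) set) set
    \<Rightarrow> ('y \<times> int) set \<times> ('y \<times> int) set \<Rightarrow> bool" where
  "entails Y \<Sigma> f \<longleftrightarrow> (\<forall>M\<in>Mod Y \<Sigma>. sat M f)"

definition closure :: "'y set \<Rightarrow> (('y \<times> int) set \<times> ('y \<times> int) set) set
    \<Rightarrow> ('y \<times> int) set \<Rightarrow> ('y \<times> int) set" where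
  "closure Y \<Sigma> M = \<Inter> {N \<in> Mod Y \<Sigma>. M \<subseteq> N}"

end

theory Submission
  imports Defs
begin

lemma shift_shift: "shift (shift M a) b = shift M (a+b)"
  unfolding shift_def by (auto simp: algebra_simps)

lemma shift_0: "shift M 0 = M"
  unfolding shift_def by auto

lemma shift_mono: "M \<subseteq> N \<Longrightarrow> shift M a \<subseteq> shift N a"
  unfolding shift_def by auto

lemma shift_back: "shift A i \<subseteq> shift M j \<Longrightarrow> shift A (i - j) \<subseteq> M"
proof -
  assume "shift A i \<subseteq> shift M j"
  hence "shift (shift A i) (-j) \<subseteq> shift (shift M j) (-j)" by (rule shift_mono)
  thus ?thesis by (simp add: shift_shift shift_0)
qed

lemma sat_shift: "sat M f \<Longrightarrow> sat (shift M j) f"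
  unfolding sat_def
proof (intro allI impI)
  fix i assume s: "\<forall>i. shift (fst f) i \<subseteq> M \<longrightarrow> shift (snd f) i \<subseteq> M"
    and h: "shift (fst f) i \<subseteq> shift M j"
  have "shift (snd f) (i - j) \<subseteq> M" using s shift_back[OF h] by blast
  hence "shift (shift (snd f) (i - j)) j \<subseteq> shift M j" by (rule shift_mono)
  thus "shift (snd f) i \<subseteq> shift M j" by (simp add: shift_shift)
qed

lemma shift_T: "M \<subseteq> T Y \<Longrightarrow> shift M j \<subseteq> T Y"
  unfolding shift_def T_def by auto

lemma Mod_shift: "M \<in> Mod Y \<Sigma> \<Longrightarrow> shift M j \<in> Mod Y \<Sigma>"
  unfolding Mod_def using sat_shift shift_T by blast

lemma TY_Mod: "\<forall>f\<in>\<Sigma>. is_formula Y f \<Longrightarrow> T Y \<in> Mod Y \<Sigma>"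
  unfolding Mod_def sat_def is_formula_def using shift_T by blast

lemma closure_Mod:
  assumes "\<forall>f\<in>\<Sigma>. is_formula Y f" "A \<subseteq> T Y"
  shows "closure Y \<Sigma> A \<in> Mod Y \<Sigma>"
proof -
  have TY: "T Y \<in> {N \<in> Mod Y \<Sigma>. A \<subseteq> N}" using TY_Mod[OF assms(1)] assms(2) by blast
  have sub: "closure Y \<Sigma> A \<subseteq> T Y" unfolding closure_def using TY by blast
  have "sat (closure Y \<Sigma> A) f" if f: "f \<in> \<Sigma>" for f
    unfolding sat_def
  proof (intro allI impI)
    fix i assume h: "shift (fst f) i \<subseteq> closure Y \<Sigma> A"
    show "shift (snd f) i \<subseteq> closure Y \<Sigma> A"
      unfolding closure_def
    proof (rule Inter_greatest)
      fix N assume N: "N \<in> {N \<in> Mod Y \<Sigma>. A \<subseteq> N}"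
      hence "shift (fst f) i \<subseteq> N" using h unfolding closure_def by blast
      moreover have "sat N f" using N f unfolding Mod_def by blast
      ultimately show "shift (snd f) i \<subseteq> N" unfolding sat_def by blast
    qed
  qed
  thus ?thesis using sub unfolding Mod_def by blast
qed

theorem theorem4:
  fixes Y :: "'y set" and \<Sigma> :: "(('y \<times> int) set \<times> ('y \<times> int) set) set"
    and A B :: "('y \<times> int) set"
  assumes "finite Y" and "Y \<noteq> {}"
    and "\<forall>f\<in>\<Sigma>. is_formula Y f"
    and "is_formula Y (A, B)"
  shows "(entails Y \<Sigma> (A, B) \<longleftrightarrow> sat (closure Y \<Sigma> A) (A, B))
       \<and> (sat (closure Y \<Sigma> A) (A, B) \<longleftrightarrow> B \<subseteq> closure Y \<Sigma> A)"
proof -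
  have AT: "A \<subseteq> T Y" using assms(4) unfolding is_formula_def by simp
  have CM: "closure Y \<Sigma> A \<in> Mod Y \<Sigma>" using closure_Mod[OF assms(3) AT] .
  have AC: "A \<subseteq> closure Y \<Sigma> A" unfolding closure_def by blast
  have 1: "entails Y \<Sigma> (A, B) \<Longrightarrow> sat (closure Y \<Sigma> A) (A, B)"
    using CM unfolding entails_def by blast
  have 2: "sat (closure Y \<Sigma> A) (A, B) \<Longrightarrow> B \<subseteq> closure Y \<Sigma> A"
    unfolding sat_def using AC by (metis fst_conv snd_conv shift_0)
  have 3: "entails Y \<Sigma> (A, B)" if B: "B \<subseteq> closure Y \<Sigma> A"
    unfolding entails_def sat_def
  proof (intro ballI allI impI)
    fix M i assume M: "M \<in> Mod Y \<Sigma>" and h: "shift (fst (A, B)) i \<subseteq> M"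
    have "shift A (i - i) \<subseteq> shift M (-i)"
      using shift_mono[OF h[simplified], of "-i"] by (simp add: shift_shift)
    hence "A \<subseteq> shift M (-i)" by (simp add: shift_0)
    moreover have "shift M (-i) \<in> Mod Y \<Sigma>" using Mod_shift[OF M] .
    ultimately have "closure Y \<Sigma> A \<subseteq> shift M (-i)" unfolding closure_def by blast
    hence "B \<subseteq> shift M (-i)" using B by blast
    hence "shift B i \<subseteq> shift (shift M (-i)) i" by (rule shift_mono)
    thus "shift (snd (A, B)) i \<subseteq> M" by (simp add: shift_shift shift_0)
  qed
  show ?thesis using 1 2 3 by blast
qed

end
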